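(* Let $\mathbb{F}\in\{\mathbb{R},\mathbb{C}\}$, let $m\le n\le 2m$, and let $\ell$ be an integer with $n-m\le\ell\le\lfloor n/2\rfloor$. Let $X_{11}$, $X_{22}$, $Y$ be nonsingular matrices over $\mathbb{F}$ of sizes $(n-\ell)\times(n-\ell)$, $(m+\ell-n)\times(m+\ell-n)$ and $\ell\times\ell$ respectively, and let $X_{12}$ be an arbitrary $(n-\ell)\times(m+\ell-n)$ matrix over $\mathbb{F}$. Define the $m\times n$ matrices $$A=\begin{pmatrix}X_{11}&X_{12}&O\\ O&X_{22}&O\end{pmatrix},\qquad B=\begin{pmatrix}O&Y\\ O&O\end{pmatrix},$$ where in $A$ the row blocks have sizes $n-\ell$, $m+\ell-n$ and the column blocks have sizes $n-\ell$, $m+\ell-n$, $n-m$, and in $B$ the row blocks have sizes $\ell$, $m-\ell$ and the column blocks have sizes $n-\ell$, $\ell$. Then $\mathrm{rank}_{\mathbb{F}}(A;B)=m+\ell$.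
   Context: $(A;B)$ denotes the $m\times n\times 2$ tensor with slices $A,B$. A rank-one such tensor has the form $(\alpha\,\mathbf{a}\mathbf{b}^T;\beta\,\mathbf{a}\mathbf{b}^T)$ with nonzero $\mathbf{a}\in\mathbb{F}^m$, $\mathbf{b}\in\mathbb{F}^n$, $(\alpha,\beta)\ne0$; $\mathrm{rank}_{\mathbb{F}}$ is the minimal number of rank-one tensors over $\mathbb{F}$ summing slicewise to the tensor. *)

theory Defs
  imports Complex_Main "Jordan_Normal_Form.Matrix"
begin

text \<open>Vectors are represented as functions on
  the index ranges {0..<m}, {0..<n}.  A and B are assumed to have the same size.\<close>
definition tensor_rank :: "'a::field mat \<Rightarrow> 'a mat \<Rightarrow> nat" where
  "tensor_rank A B = (LEAST r. \<exists>(a :: nat \<Rightarrow> nat \<Rightarrow> 'a) (b :: nat \<Rightarrow> nat \<Rightarrow> 'a)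
       (\<alpha> :: nat \<Rightarrow> 'a) (\<beta> :: nat \<Rightarrow> 'a).
     (\<forall>k<r. (\<exists>i<dim_row A. a k i \<noteq> 0) \<and> (\<exists>j<dim_col A. b k j \<noteq> 0)
             \<and> (\<alpha> k, \<beta> k) \<noteq> (0, 0)) \<and>
     (\<forall>i<dim_row A. \<forall>j<dim_col A.
        A $$ (i, j) = (\<Sum>k<r. \<alpha> k * a k i * b k j) \<and>
        B $$ (i, j) = (\<Sum>k<r. \<beta> k * a k i * b k j)))"

text \<open>A = [X11 X12 O; O X22 O] with row blocks n-l, m+l-n and column blocks
  n-l, m+l-n, n-m.\<close>
definition blockA :: "nat \<Rightarrow> nat \<Rightarrow> nat \<Rightarrow> 'a::zero mat \<Rightarrow> 'a mat \<Rightarrow> 'a mat \<Rightarrow> 'a mat" where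
  "blockA m n l X11 X12 X22 =
     four_block_mat
       (four_block_mat X11 X12 (0\<^sub>m (m + l - n) (n - l)) X22)
       (0\<^sub>m m (n - m))
       (0\<^sub>m 0 m)
       (0\<^sub>m 0 (n - m))"

definition blockB :: "nat \<Rightarrow> nat \<Rightarrow> nat \<Rightarrow> 'a::zero mat \<Rightarrow> 'a mat" where
  "blockB m n l Y =
     four_block_mat (0\<^sub>m l (n - l)) Y (0\<^sub>m (m - l) (n - l)) (0\<^sub>m (m - l) l)"

end

theory Submission
  imports Defs
begin



lemma sum_split_add: "(\<Sum>i<p+q. f i) = (\<Sum>i<p. f i) + (\<Sum>i<q. f (p+i)) "
  for f :: "nat \<Rightarrow> 'a::comm_monoid_add"
  by (induction q) (auto simp: add.assoc)

lemma sum_if_less: "p \<le> m \<Longrightarrow> (\<Sum>i<m. (if i < p then f i else 0)) = (\<Sum>i<p. f i)"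
  for f :: "nat \<Rightarrow> 'a::comm_monoid_add"
proof -
  assume "p \<le> m"
  then obtain q where "m = p + q" using le_Suc_ex by blast
  then show ?thesis by (simp add: sum_split_add)
qed

lemma inv_row_indep:
  fixes M :: "'a::field mat"
  assumes "M \<in> carrier_mat d d" "invertible_mat M"
    "\<forall>j<d. (\<Sum>i<d. y i * M $$ (i,j)) = 0" "k < d"
  shows "y k = 0"
proof -
  obtain N where MN: "M * N = 1\<^sub>m d" and NM: "N * M = 1\<^sub>m (dim_row N)"
    using assms(1,2) unfolding invertible_mat_def inverts_mat_def by auto
  have dN: "dim_col N = d" using MN by (metis index_mult_mat(3) index_one_mat(3))
  have dN2: "dim_row N = d" using NM assms(1) by (metis carrier_matD(2) index_mult_mat(3) index_one_mat(3))
  have "y k = (\<Sum>i<d. y i * (1\<^sub>m d) $$ (i,k))"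
    using assms(4) by (simp add: if_distrib cong: if_cong)
  also have "\<dots> = (\<Sum>i<d. y i * (\<Sum>j<d. M $$ (i,j) * N $$ (j,k)))"
    using assms(1,4) dN dN2 by (auto simp: MN[symmetric] scalar_prod_def atLeast0LessThan intro!: sum.cong)
  also have "\<dots> = (\<Sum>j<d. (\<Sum>i<d. y i * M $$ (i,j)) * N $$ (j,k))"
    by (simp add: sum_distrib_left sum_distrib_right mult.assoc) (rule sum.swap)
  also have "\<dots> = 0" using assms(3) by simp
  finally show ?thesis .
qed

lemma rows_bound:
  fixes g :: "'j \<Rightarrow> 'k \<Rightarrow> 'a::field"
  assumes "finite K" "finite J"
   "\<forall>w. (\<forall>k\<in>K. (\<Sum>j\<in>J. w j * g j k) = 0) \<longrightarrow> (\<forall>j\<in>J. w j = 0)"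
  shows "card J \<le> card K"
  using assms
proof (induction K arbitrary: J g rule: finite_induct)
  case empty
  then show ?case using empty.prems(2) by (auto dest: spec[of _ "\<lambda>_. 1"])
next
  case (insert k0 K)
  show ?case
  proof (cases "\<forall>j\<in>J. g j k0 = 0")
    case True
    have "\<forall>w. (\<forall>k\<in>K. (\<Sum>j\<in>J. w j * g j k) = 0) \<longrightarrow> (\<forall>j\<in>J. w j = 0)"
      using insert.prems(2) True by auto
    then have "card J \<le> card K" using insert.IH insert.prems(1) by blast
    then show ?thesis using insert.hyps by simp
  next
    case False
    then obtain j0 where j0: "j0 \<in> J" "g j0 k0 \<noteq> 0" by auto
    define g' where "g' j k = g j k - g j k0 / g j0 k0 * g j0 k" for j k
    have "\<forall>w. (\<forall>k\<in>K. (\<Sum>j\<in>J-{j0}. w j * g' j k) = 0) \<longrightarrow> (\<forall>j\<in>J-{j0}. w j = 0)"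
    proof (intro allI impI)
      fix w assume h: "\<forall>k\<in>K. (\<Sum>j\<in>J-{j0}. w j * g' j k) = 0"
      define W where "W j = (if j = j0 then - (\<Sum>j\<in>J-{j0}. w j * g j k0) / g j0 k0 else w j)" for j
      have key: "(\<Sum>j\<in>J. W j * g j k) = (\<Sum>j\<in>J-{j0}. w j * g' j k)" for k
      proof -
        have "(\<Sum>j\<in>J. W j * g j k) = W j0 * g j0 k + (\<Sum>j\<in>J-{j0}. W j * g j k)"
          using j0(1) insert.prems(1) by (simp add: sum.remove)
        also have "(\<Sum>j\<in>J-{j0}. W j * g j k) = (\<Sum>j\<in>J-{j0}. w j * g j k)"
          by (auto simp: W_def intro!: sum.cong)
        also have "(\<Sum>j\<in>J-{j0}. w j * g' j k) = (\<Sum>j\<in>J-{j0}. w j * g j k) - (\<Sum>j\<in>J-{j0}. w j * g j k0) * g j0 k / g j0 k0"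
        proof -
          have "(\<Sum>j\<in>J-{j0}. w j * g' j k) = (\<Sum>j\<in>J-{j0}. w j * g j k) - (\<Sum>j\<in>J-{j0}. w j * g j k0 * g j0 k / g j0 k0)"
            by (simp add: g'_def right_diff_distrib sum_subtractf mult_ac)
          also have "(\<Sum>j\<in>J-{j0}. w j * g j k0 * g j0 k / g j0 k0) = (\<Sum>j\<in>J-{j0}. w j * g j k0) * g j0 k / g j0 k0"
            by (simp add: sum_divide_distrib sum_distrib_right)
          finally show ?thesis .
        qed
        ultimately show ?thesis by (simp add: W_def)
      qed
      have "\<forall>k\<in>insert k0 K. (\<Sum>j\<in>J. W j * g j k) = 0"
        using h key j0(2) by (auto simp: g'_def)
      then have "\<forall>j\<in>J. W j = 0" using insert.prems(2) by blast
      then show "\<forall>j\<in>J-{j0}. w j = 0" unfolding W_def by (metis DiffE singletonI)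
    qed
    then have "card (J - {j0}) \<le> card K" using insert.IH insert.prems(1) by blast
    then show ?thesis using insert.hyps j0(1) insert.prems(1)
      by (simp add: card_Diff_singleton)
  qed
qed

definition vA :: "nat set \<Rightarrow> nat set \<Rightarrow> (nat\<Rightarrow>nat\<Rightarrow>'a) \<Rightarrow> (nat\<Rightarrow>'a) \<Rightarrow> (nat\<Rightarrow>nat\<Rightarrow>'a) \<Rightarrow> (nat\<Rightarrow>'a) \<Rightarrow> nat \<Rightarrow> 'a::field" where
  "vA I K a \<alpha> b y j = (\<Sum>k\<in>K. \<alpha> k * (\<Sum>i\<in>I. y i * a k i) * b k j)"

definition lc :: "nat set \<Rightarrow> (nat\<Rightarrow>'a) \<Rightarrow> (nat\<Rightarrow>nat\<Rightarrow>'a) \<Rightarrow> nat \<Rightarrow> 'a::comm_ring_1" where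
  "lc R u c j = (if j \<in> R then u j else 0) + (\<Sum>i\<in>R. u i * c i j)"

lemma vA_phi:
  fixes a :: "nat \<Rightarrow> nat \<Rightarrow> 'a::field"
  assumes "finite K" "k0 \<in> K" "i0 \<in> I" "finite I" "a k0 i0 \<noteq> 0"
  shows "vA I (K - {k0}) (\<lambda>k i. a k i - a k0 i * a k i0 / a k0 i0) \<alpha> b y j
       = vA I K a \<alpha> b (\<lambda>i. y i - (\<Sum>i\<in>I. y i * a k0 i) / a k0 i0 * (if i = i0 then 1 else 0)) j"
proof -
  let ?t = "(\<Sum>i\<in>I. y i * a k0 i) / a k0 i0"
  have inner: "(\<Sum>i\<in>I. (y i - ?t * (if i = i0 then 1 else 0)) * a k i) = (\<Sum>i\<in>I. y i * a k i) - ?t * a k i0" for k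
  proof -
    have d: "(\<Sum>i\<in>I. (if i = i0 then 1 else 0) * a k i) = a k i0"
    proof -
      have "(\<Sum>i\<in>I. (if i = i0 then 1 else 0) * a k i) = (\<Sum>i\<in>I. if i = i0 then a k i else 0)"
        by (rule sum.cong) auto
      also have "\<dots> = a k i0" using assms(3,4) by (simp add: sum.delta)
      finally show ?thesis .
    qed
    have "(\<Sum>i\<in>I. (y i - ?t * (if i = i0 then 1 else 0)) * a k i)
       = (\<Sum>i\<in>I. y i * a k i) - ?t * (\<Sum>i\<in>I. (if i = i0 then 1 else 0) * a k i)"
      by (simp add: left_diff_distrib sum_subtractf sum_distrib_left mult.assoc)
    then show ?thesis using d by simp
  qed
  have inner2: "(\<Sum>i\<in>I. y i * (a k i - a k0 i * a k i0 / a k0 i0)) = (\<Sum>i\<in>I. y i * a k i) - ?t * a k i0" for k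
  proof -
    have "(\<Sum>i\<in>I. y i * (a k i - a k0 i * a k i0 / a k0 i0)) = (\<Sum>i\<in>I. y i * a k i - (y i * a k0 i) * (a k i0 / a k0 i0))"
      by (rule sum.cong) (auto simp: algebra_simps)
    also have "\<dots> = (\<Sum>i\<in>I. y i * a k i) - (\<Sum>i\<in>I. y i * a k0 i) * (a k i0 / a k0 i0)"
      by (simp only: sum_subtractf sum_distrib_right)
    finally show ?thesis by simp
  qed
  have z: "(\<Sum>i\<in>I. y i * a k0 i) - ?t * a k0 i0 = 0" using assms(5) by simp
  define Y where "Y = (\<lambda>i. y i - ?t * (if i = i0 then 1 else 0))"
  have "vA I K a \<alpha> b Y j
     = \<alpha> k0 * (\<Sum>i\<in>I. Y i * a k0 i) * b k0 j + vA I (K - {k0}) a \<alpha> b Y j"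
    unfolding vA_def by (rule sum.remove[OF assms(1,2)])
  also have "(\<Sum>i\<in>I. Y i * a k0 i) = 0" unfolding Y_def inner z by simp
  also have "vA I (K - {k0}) a \<alpha> b Y j = vA I (K - {k0}) (\<lambda>k i. a k i - a k0 i * a k i0 / a k0 i0) \<alpha> b y j"
    unfolding vA_def Y_def inner inner2 by (rule refl)
  finally show ?thesis unfolding Y_def by simp
qed

lemma lc_dot:
  fixes a :: "nat \<Rightarrow> 'a::field"
  assumes "finite I" "finite R" "R \<subseteq> I"
  shows "(\<Sum>i'\<in>I. lc R u c i' * a i') = (\<Sum>i\<in>R. u i * (a i + (\<Sum>i'\<in>I. c i i' * a i')))"
proof -
  have "(\<Sum>i'\<in>I. lc R u c i' * a i') = (\<Sum>i'\<in>I. (if i' \<in> R then u i' * a i' else 0)) + (\<Sum>i'\<in>I. \<Sum>i\<in>R. u i * c i i' * a i')"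
    unfolding sum.distrib[symmetric] by (rule sum.cong) (auto simp: lc_def distrib_right sum_distrib_right)
  also have "(\<Sum>i'\<in>I. (if i' \<in> R then u i' * a i' else 0)) = (\<Sum>i\<in>R. u i * a i)"
    using assms by (simp add: sum.If_cases Int_absorb1)
  also have "(\<Sum>i'\<in>I. \<Sum>i\<in>R. u i * c i i' * a i') = (\<Sum>i\<in>R. u i * (\<Sum>i'\<in>I. c i i' * a i'))"
    by (subst sum.swap) (simp add: sum_distrib_left mult.assoc)
  finally show ?thesis by (simp add: distrib_left sum.distrib)
qed

lemma lc_phi:
  fixes a :: "nat \<Rightarrow> nat \<Rightarrow> 'a::field"
  assumes "finite I" "finite R" "R \<subseteq> I"
  shows "(\<lambda>i. lc R u c i - (\<Sum>i\<in>I. lc R u c i * a k0 i) / a k0 i0 * (if i = i0 then 1 else 0))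
       = lc R u (\<lambda>i j. c i j - (if j = i0 then (a k0 i + (\<Sum>i'\<in>I. c i i' * a k0 i')) / a k0 i0 else 0))"
proof
  fix j
  show "lc R u c j - (\<Sum>i\<in>I. lc R u c i * a k0 i) / a k0 i0 * (if j = i0 then 1 else 0)
       = lc R u (\<lambda>i j. c i j - (if j = i0 then (a k0 i + (\<Sum>i'\<in>I. c i i' * a k0 i')) / a k0 i0 else 0)) j"
    unfolding lc_dot[OF assms]
    by (cases "j = i0") (simp_all add: lc_def right_diff_distrib sum_subtractf sum_divide_distrib)
qed

lemma elim:
  fixes a :: "nat \<Rightarrow> nat \<Rightarrow> 'a::field"
  assumes "finite S" "finite I" "S \<subseteq> I" "R \<subseteq> I" "S \<inter> R = {}" "finite K"
    and "\<forall>y. (\<forall>i. i \<notin> S \<longrightarrow> y i = 0) \<longrightarrow> (\<forall>j. vA I K a \<alpha> b y j = 0) \<longrightarrow> (\<forall>i. y i = 0)"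
    and "\<forall>c u v. (\<forall>i\<in>R. \<forall>j. j \<notin> S \<longrightarrow> c i j = 0) \<longrightarrow>
          (\<forall>j. vA I K a \<alpha> b (lc R u c) j + vA I K a \<beta> b (lc R v c) j = 0) \<longrightarrow> (\<forall>i\<in>R. u i = 0 \<and> v i = 0)"
  shows "card S + 2 * card R \<le> card K"
  using assms
proof (induction S arbitrary: K a rule: finite_induct)
  case empty
  have fR: "finite R" using empty.prems(1,3) finite_subset by blast
  define g where "g = (\<lambda>(i,t) k. (if t = (0::nat) then \<alpha> k else \<beta> k) * a k i)"
  have "card (R \<times> {0::nat,1}) \<le> card K"
  proof (rule rows_bound[OF empty.prems(5)])
    show "finite (R \<times> {0::nat,1})" using fR by simp
    show "\<forall>w. (\<forall>k\<in>K. (\<Sum>j\<in>R \<times> {0::nat,1}. w j * g j k) = 0) \<longrightarrow> (\<forall>j\<in>R \<times> {0::nat,1}. w j = 0)"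
    proof (intro allI impI)
      fix w assume h: "\<forall>k\<in>K. (\<Sum>j\<in>R \<times> {0::nat,1}. w j * g j k) = 0"
      define u where "u i = w (i,0)" for i
      define v where "v i = w (i,1)" for i
      have cart: "(\<Sum>jj\<in>R \<times> {0::nat,1}. F jj) = (\<Sum>i\<in>R. F (i,0) + F (i,1))" for F :: "nat \<times> nat \<Rightarrow> 'a"
      proof -
        have "(\<Sum>i\<in>R. F (i,0) + F (i,1)) = (\<Sum>i\<in>R. \<Sum>t\<in>{0::nat,1}. F (i,t))" by simp
        also have "\<dots> = (\<Sum>(i,t)\<in>R \<times> {0::nat,1}. F (i,t))" by (rule sum.cartesian_product)
        finally show ?thesis by (simp add: case_prod_eta)
      qed
      have dot: "(\<Sum>i\<in>I. lc R z (\<lambda>_ _. 0) i * a k i) = (\<Sum>i\<in>R. z i * a k i)" for z k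
        using lc_dot[OF empty.prems(1) fR empty.prems(3), of z "\<lambda>_ _. 0" "a k"] by simp
      have "\<forall>j. vA I K a \<alpha> b (lc R u (\<lambda>_ _. 0)) j + vA I K a \<beta> b (lc R v (\<lambda>_ _. 0)) j = 0"
      proof
        fix j
        have "vA I K a \<alpha> b (lc R u (\<lambda>_ _. 0)) j + vA I K a \<beta> b (lc R v (\<lambda>_ _. 0)) j
           = (\<Sum>k\<in>K. (\<Sum>jj\<in>R \<times> {0::nat,1}. w jj * g jj k) * b k j)"
          unfolding vA_def dot cart sum.distrib[symmetric] sum_distrib_right
          by (intro sum.cong refl) (simp add: g_def u_def v_def algebra_simps sum_distrib_left sum_distrib_right sum.distrib)
        also have "\<dots> = 0" using h by simp
        finally show "vA I K a \<alpha> b (lc R u (\<lambda>_ _. 0)) j + vA I K a \<beta> b (lc R v (\<lambda>_ _. 0)) j = 0" .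
      qed
      then have "\<forall>i\<in>R. u i = 0 \<and> v i = 0" using empty.prems(7)[rule_format, of "\<lambda>_ _. 0" u v] by simp
      then show "\<forall>j\<in>R \<times> {0::nat,1}. w j = 0" by (auto simp: u_def v_def)
    qed
  qed
  then show ?case using fR by (simp add: card_cartesian_product)
next
  case (insert i0 S)
  have fI: "finite I" and i0I: "i0 \<in> I" and SI: "S \<subseteq> I" and RI: "R \<subseteq> I" and fK: "finite K"
    using insert.prems(1-5) by auto
  have fR: "finite R" using fI RI finite_subset by blast
  have i0R: "i0 \<notin> R" using insert.prems(4) by auto
  have "\<exists>k0\<in>K. a k0 i0 \<noteq> 0"
  proof (rule ccontr)
    assume "\<not> ?thesis"
    then have z: "\<forall>k\<in>K. a k i0 = 0" by auto
    define e where "e = (\<lambda>i. if i = i0 then (1::'a) else 0)"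
    have "(\<Sum>i\<in>I. e i * a k i) = a k i0" for k
    proof -
      have "(\<Sum>i\<in>I. e i * a k i) = (\<Sum>i\<in>I. if i = i0 then a k i else 0)"
        by (rule sum.cong) (auto simp: e_def)
      also have "\<dots> = a k i0" using i0I fI by (simp add: sum.delta)
      finally show ?thesis .
    qed
    then have ev: "\<forall>j. vA I K a \<alpha> b e j = 0" using z by (simp add: vA_def)
    have es: "\<forall>i. i \<notin> insert i0 S \<longrightarrow> e i = 0" by (simp add: e_def)
    have "\<forall>i. e i = 0" using mp[OF mp[OF spec[OF insert.prems(6), of e] es] ev] .
    then show False by (auto simp: e_def dest: spec[of _ i0])
  qed
  then obtain k0 where k0: "k0 \<in> K" "a k0 i0 \<noteq> 0" by auto
  define a' where "a' = (\<lambda>k i. a k i - a k0 i * a k i0 / a k0 i0)"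
  define phi where "phi = (\<lambda>(y::nat\<Rightarrow>'a) i. y i - (\<Sum>i\<in>I. y i * a k0 i) / a k0 i0 * (if i = i0 then 1 else 0))"
  have vphi: "vA I (K - {k0}) a' \<gamma> b y j = vA I K a \<gamma> b (phi y) j" for \<gamma> y j
    unfolding a'_def phi_def using vA_phi[of K k0 i0 I a, OF fK k0(1) i0I fI k0(2)] by (simp only:)
  have H1': "\<forall>y. (\<forall>i. i \<notin> S \<longrightarrow> y i = 0) \<longrightarrow> (\<forall>j. vA I (K - {k0}) a' \<alpha> b y j = 0) \<longrightarrow> (\<forall>i. y i = 0)"
  proof (intro allI impI)
    fix y i assume s: "\<forall>i. i \<notin> S \<longrightarrow> y i = 0" and v: "\<forall>j. vA I (K - {k0}) a' \<alpha> b y j = 0"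
    have "\<forall>i. i \<notin> insert i0 S \<longrightarrow> phi y i = 0" using s by (simp add: phi_def)
    moreover have "\<forall>j. vA I K a \<alpha> b (phi y) j = 0"
    proof
      fix j show "vA I K a \<alpha> b (phi y) j = 0" using v[rule_format, of j] unfolding vphi .
    qed
    ultimately have p: "\<forall>i. phi y i = 0" by (rule mp[OF mp[OF spec[OF insert.prems(6), of "phi y"]]])
    show "y i = 0"
    proof (cases "i = i0")
      case True then show ?thesis using s insert.hyps(2) by simp
    next
      case False then show ?thesis using p[rule_format, of i] by (simp add: phi_def)
    qed
  qed
  have H2': "\<forall>c u v. (\<forall>i\<in>R. \<forall>j. j \<notin> S \<longrightarrow> c i j = 0) \<longrightarrow>
          (\<forall>j. vA I (K - {k0}) a' \<alpha> b (lc R u c) j + vA I (K - {k0}) a' \<beta> b (lc R v c) j = 0) \<longrightarrow> (\<forall>i\<in>R. u i = 0 \<and> v i = 0)"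
  proof (intro allI impI)
    fix c u v
    assume cs: "\<forall>i\<in>R. \<forall>j. j \<notin> S \<longrightarrow> c i j = 0"
      and h: "\<forall>j. vA I (K - {k0}) a' \<alpha> b (lc R u c) j + vA I (K - {k0}) a' \<beta> b (lc R v c) j = 0"
    define c' where "c' = (\<lambda>i j. c i j - (if j = i0 then (a k0 i + (\<Sum>i'\<in>I. c i i' * a k0 i')) / a k0 i0 else 0))"
    have pl: "phi (lc R z c) = lc R z c'" for z
      unfolding phi_def c'_def by (rule lc_phi[OF fI fR RI])
    have "\<forall>i\<in>R. \<forall>j. j \<notin> insert i0 S \<longrightarrow> c' i j = 0" using cs by (simp add: c'_def)
    moreover have "\<forall>j. vA I K a \<alpha> b (lc R u c') j + vA I K a \<beta> b (lc R v c') j = 0"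
    proof
      fix j show "vA I K a \<alpha> b (lc R u c') j + vA I K a \<beta> b (lc R v c') j = 0"
        using h[rule_format, of j] unfolding vphi pl .
    qed
    ultimately show "\<forall>i\<in>R. u i = 0 \<and> v i = 0" by (rule mp[OF mp[OF spec[OF spec[OF spec[OF insert.prems(7), of c'], of u], of v]]])
  qed
  have "card S + 2 * card R \<le> card (K - {k0})"
  proof -
    have SR: "S \<inter> R = {}" using insert.prems(4) by auto
    have fK': "finite (K - {k0})" using fK by simp
    show ?thesis by (rule insert.IH[OF fI SI RI SR fK' H1' H2'])
  qed
  moreover have "card K = Suc (card (K - {k0}))" using fK k0(1) by (rule card.remove)
  moreover have "card (insert i0 S) = Suc (card S)" using insert.hyps by simp
  ultimately show ?case by linarith
qed


lemma vA_conv: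
  fixes M :: "'a::field mat"
  assumes "\<forall>i<m. \<forall>j<n. M $$ (i,j) = (\<Sum>k<r. \<gamma> k * a k i * b k j)"
  shows "vA {..<m} {..<r} a \<gamma> (\<lambda>k j. if j<n then b k j else 0) y j = (if j<n then (\<Sum>i<m. y i * M $$ (i,j)) else 0)"
proof (cases "j < n")
  case True
  have "vA {..<m} {..<r} a \<gamma> (\<lambda>k j. if j<n then b k j else 0) y j = (\<Sum>k<r. \<Sum>i<m. y i * (\<gamma> k * a k i * b k j))"
    unfolding vA_def using True by (simp add: sum_distrib_left sum_distrib_right mult_ac)
  also have "\<dots> = (\<Sum>i<m. \<Sum>k<r. y i * (\<gamma> k * a k i * b k j))" by (rule sum.swap)
  also have "\<dots> = (\<Sum>i<m. y i * M $$ (i,j))"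
    using assms True by (simp add: sum_distrib_left[symmetric])
  finally show ?thesis using True by simp
qed (simp add: vA_def)

lemma main_generic:
  fixes X11 X12 X22 Y :: "'a::field mat"
  assumes mn: "m \<le> n" "n \<le> 2*m" "n - m \<le> l" "l \<le> n div 2"
  and X11: "X11 \<in> carrier_mat (n-l) (n-l)" "invertible_mat X11"
  and X22: "X22 \<in> carrier_mat (m+l-n) (m+l-n)" "invertible_mat X22"
  and Y: "Y \<in> carrier_mat l l" "invertible_mat Y"
  and X12: "X12 \<in> carrier_mat (n-l) (m+l-n)"
  shows "tensor_rank (blockA m n l X11 X12 X22) (blockB m n l Y) = m + l"
proof -
  define A where "A = blockA m n l X11 X12 X22"
  define B where "B = blockB m n l Y"
  define p where "p = n - l"
  define q where "q = m + l - n"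
  have pq: "p + q = m" "l \<le> p" "p + l = n" "l \<le> m" "p \<le> m" "q \<le> l"
    using mn by (auto simp: p_def q_def)
  note X11' = X11[folded p_def] and X22' = X22[folded q_def] and X12' = X12[folded p_def q_def]
  have dA: "dim_row A = m" "dim_col A = n"
    using X11' X22' pq mn unfolding A_def blockA_def by (auto simp: p_def q_def)
  have Aent: "A $$ (i,j) = (if j < m then (if i < p then (if j < p then X11 $$ (i,j) else X12 $$ (i,j-p))
       else (if j < p then 0 else X22 $$ (i-p,j-p))) else 0)" if "i < m" "j < n" for i j
    using X11' X22' X12' pq mn that unfolding A_def blockA_def by (auto simp: p_def q_def)
  have Bent: "B $$ (i,j) = (if i < l \<and> p \<le> j then Y $$ (i,j-p) else 0)" if "i < m" "j < n" for i j
    using Y pq mn that unfolding B_def blockB_def by (auto simp: p_def)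
  have RA1: "\<forall>i<p. y i = 0" if h: "\<forall>j<p. (\<Sum>i<m. y i * A $$ (i,j)) = 0" for y
  proof (intro allI impI)
    fix i assume "i < p"
    show "y i = 0"
    proof (rule inv_row_indep[OF X11'(1,2) _ \<open>i < p\<close>])
      show "\<forall>j<p. (\<Sum>i<p. y i * X11 $$ (i, j)) = 0"
      proof (intro allI impI)
        fix j assume j: "j < p"
        have "(\<Sum>i<m. y i * A $$ (i,j)) = (\<Sum>i<m. if i < p then y i * X11 $$ (i,j) else 0)"
          using j pq by (intro sum.cong refl) (simp add: Aent)
        also have "\<dots> = (\<Sum>i<p. y i * X11 $$ (i,j))" using pq(5) by (rule sum_if_less)
        finally show "(\<Sum>i<p. y i * X11 $$ (i, j)) = 0" using h j pq by simp
      qed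
    qed
  qed
  have RA: "\<forall>i<m. y i = 0" if h: "\<forall>j<n. (\<Sum>i<m. y i * A $$ (i,j)) = 0" for y
  proof -
    have y1: "y i = 0" if "i < p" for i
      using RA1[of y] h pq that by auto
    have y2: "y (p + i) = 0" if "i < q" for i
    proof (rule inv_row_indep[OF X22'(1,2), of "\<lambda>i. y (p+i)", OF _ that])
      show "\<forall>j<q. (\<Sum>i<q. y (p+i) * X22 $$ (i, j)) = 0"
      proof (intro allI impI)
        fix j assume j: "j < q"
        have "(\<Sum>i<m. y i * A $$ (i,p+j)) = (\<Sum>i<p. y i * A $$ (i,p+j)) + (\<Sum>i<q. y (p+i) * A $$ (p+i,p+j))"
          using pq(1) sum_split_add[of "\<lambda>i. y i * A $$ (i,p+j)" p q] by simp
        also have "(\<Sum>i<p. y i * A $$ (i,p+j)) = 0" using y1 by simp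
        also have "(\<Sum>i<q. y (p+i) * A $$ (p+i,p+j)) = (\<Sum>i<q. y (p+i) * X22 $$ (i,j))"
          using j pq by (intro sum.cong refl) (subst Aent, auto)
        finally show "(\<Sum>i<q. y (p+i) * X22 $$ (i, j)) = 0" using h j pq by simp
      qed
    qed
    show ?thesis
    proof (intro allI impI)
      fix i assume "i < m"
      show "y i = 0"
      proof (cases "i < p")
        case True then show ?thesis by (rule y1)
      next
        case False
        then have "i = p + (i - p)" "i - p < q" using \<open>i < m\<close> pq by auto
        then show ?thesis using y2 by metis
      qed
    qed
  qed
  have RB: "\<forall>i<l. v i = 0" if h: "\<forall>j<n. (\<Sum>i<l. v i * B $$ (i,j)) = 0" for v
  proof (intro allI impI)
    fix i assume i: "i < l"
    show "v i = 0"
    proof (rule inv_row_indep[OF Y(1,2) _ i])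
      show "\<forall>j<l. (\<Sum>i<l. v i * Y $$ (i, j)) = 0"
      proof (intro allI impI)
        fix j assume j: "j < l"
        have "(\<Sum>i<l. v i * B $$ (i,p+j)) = (\<Sum>i<l. v i * Y $$ (i,j))"
          using j pq by (intro sum.cong refl) (subst Bent, auto)
        then show "(\<Sum>i<l. v i * Y $$ (i, j)) = 0" using h j pq by simp
      qed
    qed
  qed
  define P where "P = (\<lambda>r. \<exists>(a :: nat \<Rightarrow> nat \<Rightarrow> 'a) (b :: nat \<Rightarrow> nat \<Rightarrow> 'a)
       (\<alpha> :: nat \<Rightarrow> 'a) (\<beta> :: nat \<Rightarrow> 'a).
     (\<forall>k<r. (\<exists>i<m. a k i \<noteq> 0) \<and> (\<exists>j<n. b k j \<noteq> 0)
             \<and> (\<alpha> k, \<beta> k) \<noteq> (0, 0)) \<and>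
     (\<forall>i<m. \<forall>j<n.
        A $$ (i, j) = (\<Sum>k<r. \<alpha> k * a k i * b k j) \<and>
        B $$ (i, j) = (\<Sum>k<r. \<beta> k * a k i * b k j)))"
  have up: "P (m + l)"
  proof -
    define a0 :: "nat \<Rightarrow> nat \<Rightarrow> 'a" where "a0 k i = (if k < m then (if i = k then 1 else 0) else (if i = k - m then 1 else 0))" for k i
    define b0 where "b0 k j = (if k < m then A $$ (k,j) else B $$ (k - m, j))" for k j
    define \<alpha>0 :: "nat \<Rightarrow> 'a" where "\<alpha>0 k = (if k < m then 1 else 0)" for k
    define \<beta>0 :: "nat \<Rightarrow> 'a" where "\<beta>0 k = (if k < m then 0 else 1)" for k
    have c1: "\<forall>k<m+l. (\<exists>i<m. a0 k i \<noteq> 0) \<and> (\<exists>j<n. b0 k j \<noteq> 0) \<and> (\<alpha>0 k, \<beta>0 k) \<noteq> (0,0)"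
    proof (intro allI impI conjI)
      fix k assume k: "k < m + l"
      show "\<exists>i<m. a0 k i \<noteq> 0"
      proof (cases "k < m")
        case True then show ?thesis by (intro exI[of _ k]) (simp add: a0_def)
      next
        case False then show ?thesis using k pq by (intro exI[of _ "k - m"]) (simp add: a0_def)
      qed
      show "(\<alpha>0 k, \<beta>0 k) \<noteq> (0,0)" by (simp add: \<alpha>0_def \<beta>0_def)
      show "\<exists>j<n. b0 k j \<noteq> 0"
      proof (cases "k < m")
        case True
        show ?thesis
        proof (rule ccontr)
          assume "\<not> ?thesis"
          then have z: "\<forall>j<n. A $$ (k,j) = 0" using True by (simp add: b0_def)
          define y :: "nat \<Rightarrow> 'a" where "y i = (if i = k then 1 else 0)" for i
          have "\<forall>j<n. (\<Sum>i<m. y i * A $$ (i,j)) = 0"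
          proof (intro allI impI)
            fix j assume "j < n"
            have "(\<Sum>i<m. y i * A $$ (i,j)) = (\<Sum>i<m. if i = k then A $$ (k,j) else 0)"
              by (intro sum.cong refl) (simp add: y_def)
            also have "\<dots> = A $$ (k,j)" using True by simp
            finally show "(\<Sum>i<m. y i * A $$ (i,j)) = 0" using z \<open>j < n\<close> by simp
          qed
          then have "y k = 0" using RA True by blast
          then show False by (simp add: y_def)
        qed
      next
        case False
        then have kl: "k - m < l" using k by simp
        show ?thesis
        proof (rule ccontr)
          assume "\<not> ?thesis"
          then have z: "\<forall>j<n. B $$ (k - m,j) = 0" using False by (simp add: b0_def)
          define v :: "nat \<Rightarrow> 'a" where "v i = (if i = k - m then 1 else 0)" for i
          have "\<forall>j<n. (\<Sum>i<l. v i * B $$ (i,j)) = 0"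
          proof (intro allI impI)
            fix j assume "j < n"
            have "(\<Sum>i<l. v i * B $$ (i,j)) = (\<Sum>i<l. if i = k - m then B $$ (k - m,j) else 0)"
              by (intro sum.cong refl) (simp add: v_def)
            also have "\<dots> = B $$ (k - m,j)" using kl by simp
            finally show "(\<Sum>i<l. v i * B $$ (i,j)) = 0" using z \<open>j < n\<close> by simp
          qed
          then have "v (k - m) = 0" using RB kl by blast
          then show False by (simp add: v_def)
        qed
      qed
    qed
    have c2: "\<forall>i<m. \<forall>j<n. A $$ (i,j) = (\<Sum>k<m+l. \<alpha>0 k * a0 k i * b0 k j) \<and> B $$ (i,j) = (\<Sum>k<m+l. \<beta>0 k * a0 k i * b0 k j)"
    proof (intro allI impI conjI)
      fix i j assume i: "i < m" and j: "j < n"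
      have "(\<Sum>k<m+l. \<alpha>0 k * a0 k i * b0 k j) = (\<Sum>k<m. \<alpha>0 k * a0 k i * b0 k j) + (\<Sum>k<l. \<alpha>0 (m+k) * a0 (m+k) i * b0 (m+k) j)"
        by (rule sum_split_add)
      also have "(\<Sum>k<l. \<alpha>0 (m+k) * a0 (m+k) i * b0 (m+k) j) = 0" by (simp add: \<alpha>0_def)
      also have "(\<Sum>k<m. \<alpha>0 k * a0 k i * b0 k j) = (\<Sum>k<m. if k = i then A $$ (i,j) else 0)"
        by (intro sum.cong refl) (auto simp: \<alpha>0_def a0_def b0_def)
      also have "\<dots> = A $$ (i,j)" using i by simp
      finally show "A $$ (i,j) = (\<Sum>k<m+l. \<alpha>0 k * a0 k i * b0 k j)" by simp
      have "(\<Sum>k<m+l. \<beta>0 k * a0 k i * b0 k j) = (\<Sum>k<m. \<beta>0 k * a0 k i * b0 k j) + (\<Sum>k<l. \<beta>0 (m+k) * a0 (m+k) i * b0 (m+k) j)"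
        by (rule sum_split_add)
      also have "(\<Sum>k<m. \<beta>0 k * a0 k i * b0 k j) = 0" by (simp add: \<beta>0_def)
      also have "(\<Sum>k<l. \<beta>0 (m+k) * a0 (m+k) i * b0 (m+k) j) = (\<Sum>k<l. if k = i then B $$ (i,j) else 0)"
        by (intro sum.cong refl) (auto simp: \<beta>0_def a0_def b0_def)
      also have "\<dots> = B $$ (i,j)" using i j Bent by simp
      finally show "B $$ (i,j) = (\<Sum>k<m+l. \<beta>0 k * a0 k i * b0 k j)" by simp
    qed
    show ?thesis unfolding P_def
      by (rule exI[of _ a0], rule exI[of _ b0], rule exI[of _ \<alpha>0], rule exI[of _ \<beta>0], rule conjI[OF c1 c2])
  qed
  have low: "m + l \<le> r" if Pr: "P r" for r
  proof -
    obtain a b \<alpha> \<beta> where dec: "\<forall>i<m. \<forall>j<n.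
        A $$ (i, j) = (\<Sum>k<r. \<alpha> k * a k i * b k j) \<and>
        B $$ (i, j) = (\<Sum>k<r. \<beta> k * a k i * b k j)"
      using Pr unfolding P_def by blast
    define bt where "bt = (\<lambda>k j. if j<n then b k j else (0::'a))"
    have cA: "vA {..<m} {..<r} a \<alpha> bt y j = (if j<n then (\<Sum>i<m. y i * A $$ (i,j)) else 0)" for y j
      unfolding bt_def by (rule vA_conv) (use dec in auto)
    have cB: "vA {..<m} {..<r} a \<beta> bt y j = (if j<n then (\<Sum>i<m. y i * B $$ (i,j)) else 0)" for y j
      unfolding bt_def by (rule vA_conv) (use dec in auto)
    have "card {l..<m} + 2 * card {..<l} \<le> card {..<r}"
    proof (rule elim[where S="{l..<m}" and I="{..<m}" and R="{..<l}" and K="{..<r}" and a=a and \<alpha>=\<alpha> and \<beta>=\<beta> and b=bt])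
      show "finite {l..<m}" "finite {..<m}" "{l..<m} \<subseteq> {..<m}" "{..<l} \<subseteq> {..<m}" "{l..<m} \<inter> {..<l} = {}" "finite {..<r}"
        using pq by auto
      show "\<forall>y. (\<forall>i. i \<notin> {l..<m} \<longrightarrow> y i = 0) \<longrightarrow> (\<forall>j. vA {..<m} {..<r} a \<alpha> bt y j = 0) \<longrightarrow> (\<forall>i. y i = 0)"
      proof (intro allI impI)
        fix y i assume s: "\<forall>i. i \<notin> {l..<m} \<longrightarrow> y i = 0" and v: "\<forall>j. vA {..<m} {..<r} a \<alpha> bt y j = 0"
        have "\<forall>j<n. (\<Sum>i<m. y i * A $$ (i,j)) = 0"
        proof (intro allI impI)
          fix j assume "j < n" then show "(\<Sum>i<m. y i * A $$ (i,j)) = 0" using v[rule_format, of j] by (simp add: cA)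
        qed
        then have "\<forall>i<m. y i = 0" by (rule RA)
        then show "y i = 0" using s by (cases "i < m") auto
      qed
      show "\<forall>c u v. (\<forall>i\<in>{..<l}. \<forall>j. j \<notin> {l..<m} \<longrightarrow> c i j = 0) \<longrightarrow>
          (\<forall>j. vA {..<m} {..<r} a \<alpha> bt (lc {..<l} u c) j + vA {..<m} {..<r} a \<beta> bt (lc {..<l} v c) j = 0) \<longrightarrow>
          (\<forall>i\<in>{..<l}. u i = 0 \<and> v i = 0)"
      proof (intro allI impI)
        fix c u v
        assume cs: "\<forall>i\<in>{..<l}. \<forall>j. j \<notin> {l..<m} \<longrightarrow> c i j = 0"
          and h: "\<forall>j. vA {..<m} {..<r} a \<alpha> bt (lc {..<l} u c) j + vA {..<m} {..<r} a \<beta> bt (lc {..<l} v c) j = 0"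
        have lcR: "lc {..<l} w c i = w i" if "i < l" for w i
        proof -
          have "(\<Sum>i'<l. w i' * c i' i) = 0" using cs that by (intro sum.neutral) auto
          then show ?thesis using that by (simp add: lc_def)
        qed
        have hj: "(\<Sum>i<m. lc {..<l} u c i * A $$ (i,j)) + (\<Sum>i<m. lc {..<l} v c i * B $$ (i,j)) = 0" if "j < n" for j
          using h[rule_format, of j] that by (simp add: cA cB)
        have "\<forall>j<p. (\<Sum>i<m. lc {..<l} u c i * A $$ (i,j)) = 0"
        proof (intro allI impI)
          fix j assume j: "j < p"
          have "(\<Sum>i<m. lc {..<l} v c i * B $$ (i,j)) = 0"
            using j pq by (intro sum.neutral ballI) (subst Bent, auto)
          then show "(\<Sum>i<m. lc {..<l} u c i * A $$ (i,j)) = 0" using hj[of j] j pq by simp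
        qed
        then have y0: "\<forall>i<p. lc {..<l} u c i = 0" by (rule RA1)
        have u0: "u i = 0" if "i < l" for i using y0 lcR[of i u] that pq by auto
        have Y0: "lc {..<l} u c i = 0" for i using u0 by (simp add: lc_def)
        have "\<forall>j<n. (\<Sum>i<l. v i * B $$ (i,j)) = 0"
        proof (intro allI impI)
          fix j assume j: "j < n"
          have "(\<Sum>i<m. lc {..<l} v c i * B $$ (i,j)) = (\<Sum>i<m. if i < l then v i * B $$ (i,j) else 0)"
            using j pq by (intro sum.cong refl) (auto simp: lcR Bent)
          also have "\<dots> = (\<Sum>i<l. v i * B $$ (i,j))" using pq(4) by (rule sum_if_less)
          finally show "(\<Sum>i<l. v i * B $$ (i,j)) = 0" using hj[OF j] Y0 by simp
        qed
        then have "\<forall>i<l. v i = 0" by (rule RB)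
        then show "\<forall>i\<in>{..<l}. u i = 0 \<and> v i = 0" using u0 by auto
      qed
    qed
    then show ?thesis using pq by simp
  qed
  have "tensor_rank A B = (LEAST r. P r)"
    unfolding tensor_rank_def P_def dA ..
  also have "\<dots> = m + l" by (rule Least_equality[of P, OF up low])
  finally show ?thesis unfolding A_def B_def .
qed


theorem mainTheorem7:
  fixes m n l :: nat
  assumes "m \<le> n" and "n \<le> 2 * m" and "n - m \<le> l" and "l \<le> n div 2"
  shows "(\<forall>(X11 :: real mat) X12 X22 Y.
            X11 \<in> carrier_mat (n - l) (n - l) \<and> invertible_mat X11 \<and>
            X22 \<in> carrier_mat (m + l - n) (m + l - n) \<and> invertible_mat X22 \<and>
            Y \<in> carrier_mat l l \<and> invertible_mat Y \<and>
            X12 \<in> carrier_mat (n - l) (m + l - n) \<longrightarrow>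
            tensor_rank (blockA m n l X11 X12 X22) (blockB m n l Y) = m + l)
       \<and> (\<forall>(X11 :: complex mat) X12 X22 Y.
            X11 \<in> carrier_mat (n - l) (n - l) \<and> invertible_mat X11 \<and>
            X22 \<in> carrier_mat (m + l - n) (m + l - n) \<and> invertible_mat X22 \<and>
            Y \<in> carrier_mat l l \<and> invertible_mat Y \<and>
            X12 \<in> carrier_mat (n - l) (m + l - n) \<longrightarrow>
            tensor_rank (blockA m n l X11 X12 X22) (blockB m n l Y) = m + l)"
  using assms by (intro conjI allI impI; rule main_generic; simp)

end
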